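(* Let $(x_k)_{k\ge0}$ be indeterminates, define $a_n=x_n$ if $n=2^k-1$ for some integer $k\ge0$ and $a_n=0$ otherwise, let $D(n)=\det\left(a_{i+j+1}\right)_{i,j=0}^{n-1}$ with $D(0)=1$, and let $T_n=\frac{D(n)D(n+2)}{D(n+1)^2}$ (in the field of rational functions). Then for all $n\ge0$, $$T_{2n+1}=-T_{2n},\qquad T_{4n}=(-1)^n\frac{x_3}{x_1},$$ and for all $k\ge2$ and $n\ge0$, $$T_{2^{k+1}n+2^k-1}=(-1)^n\frac{x_1x_{2^{k+1}-1}}{x_{2^k-1}^2}.$$ *)

theory Defs
  imports "HOL-Library.Poly_Mapping" "HOL-Computational_Algebra.Fraction_Field"
    "Jordan_Normal_Form.Determinant"
begin

text \<open>Multivariate polynomials over the integers in the indeterminates x_0, x_1, ...: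
  monomials are finitely supported exponent vectors nat \<Rightarrow>0 nat.\<close>
type_synonym mpoly = "(nat \<Rightarrow>\<^sub>0 nat) \<Rightarrow>\<^sub>0 int"
type_synonym ratfun = "mpoly fract"

definition X :: "nat \<Rightarrow> ratfun" where
  "X k = Fract (Poly_Mapping.single (Poly_Mapping.single k 1) 1) 1"

definition seq_a :: "nat \<Rightarrow> ratfun" where
  "seq_a n = (if \<exists>k::nat. n = 2 ^ k - 1 then X n else 0)"

definition hankelD :: "nat \<Rightarrow> ratfun" where
  "hankelD n = det (mat n n (\<lambda>(i, j). seq_a (i + j + 1)))"

definition T :: "nat \<Rightarrow> ratfun" where
  "T n = hankelD n * hankelD (n + 2) / (hankelD (n + 1))^2"

end

theory Submission
  imports Defs
begin

lemma det_perm_sym: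
  fixes f :: "nat \<Rightarrow> nat \<Rightarrow> 'a :: comm_ring_1"
  assumes p: "p permutes {0..<n}"
  shows "det (mat n n (\<lambda>(i,j). f (p i) (p j))) = det (mat n n (\<lambda>(i,j). f i j))"
proof -
  have pin: "\<And>i. i < n \<Longrightarrow> p i < n" using permutes_in_image[OF p] by auto
  let ?B = "mat n n (\<lambda>(i,j). f i (p j))"
  have 1: "det (mat n n (\<lambda>(i,j). ?B $$ (p i, j))) = signof p * det ?B"
    by (rule det_permute_rows[OF _ p]) auto
  have e1: "mat n n (\<lambda>(i,j). ?B $$ (p i, j)) = mat n n (\<lambda>(i,j). f (p i) (p j))"
    by (rule eq_matI) (auto simp: pin)
  let ?C = "mat n n (\<lambda>(i,j). f j i)"
  have 2: "det (mat n n (\<lambda>(i,j). ?C $$ (p i, j))) = signof p * det ?C"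
    by (rule det_permute_rows[OF _ p]) auto
  have e2: "mat n n (\<lambda>(i,j). ?C $$ (p i, j)) = transpose_mat ?B"
    by (rule eq_matI) (auto simp: pin)
  have e3: "det ?B = det (transpose_mat ?B)" by (rule det_transpose[symmetric]) auto
  have e4: "det ?C = det (transpose_mat ?C)" by (rule det_transpose[symmetric]) auto
  have e5: "transpose_mat ?C = mat n n (\<lambda>(i,j). f i j)" by (rule eq_matI) auto
  have "det (mat n n (\<lambda>(i,j). f (p i) (p j))) = signof p * (signof p * det (mat n n (\<lambda>(i,j). f i j)))"
    using 1 2 e1 e2 e3 e4 e5 by metis
  also have "\<dots> = det (mat n n (\<lambda>(i,j). f i j))"
    by (simp add: mult.assoc[symmetric] of_int_mult[symmetric])
  finally show ?thesis .
qed

definition aa :: "(nat \<Rightarrow> 'a::zero) \<Rightarrow> nat \<Rightarrow> 'a" where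
  "aa x n = (if \<exists>k::nat. n = 2 ^ k - 1 then x n else 0)"

definition sh :: "(nat \<Rightarrow> 'a) \<Rightarrow> nat \<Rightarrow> 'a" where
  "sh x = (\<lambda>j. x (2 * j + 1))"

lemma aa_odd: "odd n \<Longrightarrow> aa x n = aa (sh x) (n div 2)"
proof -
  assume o: "odd n"
  then obtain j where j: "n = 2 * j + 1" by (metis oddE)
  have "(\<exists>k::nat. 2 * j + 1 = 2 ^ k - 1) \<longleftrightarrow> (\<exists>k::nat. j = 2 ^ k - 1)"
  proof
    assume "\<exists>k::nat. 2 * j + 1 = 2 ^ k - 1"
    then obtain k :: nat where k: "2 * j + 1 = 2 ^ k - 1" by blast
    have "k \<noteq> 0" using k by (cases k) auto
    then obtain k' where "k = Suc k'" by (cases k) auto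
    with k have "j = 2 ^ k' - 1" by simp
    thus "\<exists>k::nat. j = 2 ^ k - 1" by blast
  next
    assume "\<exists>k::nat. j = 2 ^ k - 1"
    then obtain k :: nat where k: "j = 2 ^ k - 1" by blast
    have "(1::nat) \<le> 2 ^ k" by simp
    hence "2 * j + 1 = 2 * 2 ^ k - 1" using k by arith
    hence "2 * j + 1 = 2 ^ Suc k - 1" by simp
    thus "\<exists>k::nat. 2 * j + 1 = 2 ^ k - 1" by blast
  qed
  thus ?thesis using j by (simp add: aa_def sh_def)
qed

lemma aa_even: "even n \<Longrightarrow> aa x n = (if n = 0 then x 0 else 0)"
proof -
  assume e: "even n"
  have "n \<noteq> 0 \<Longrightarrow> \<not> (\<exists>k::nat. n = 2 ^ k - 1)"
  proof
    assume "n \<noteq> 0" "\<exists>k::nat. n = 2 ^ k - 1"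
    then obtain k :: nat where k: "n = 2 ^ k - 1" by blast
    have "k \<noteq> 0" using k \<open>n \<noteq> 0\<close> by (cases k) auto
    then obtain k' where "k = Suc k'" by (cases k) auto
    hence "odd n" using k by simp
    thus False using e by simp
  qed
  moreover have "aa x 0 = x 0" unfolding aa_def by (metis diff_self_eq_0 power_0)
  ultimately show ?thesis by (auto simp: aa_def)
qed

definition pp :: "nat \<Rightarrow> nat \<Rightarrow> nat" where
  "pp n i = (if i < (n + 1) div 2 then 2 * i else if i < n then 2 * (i - (n + 1) div 2) + 1 else i)"

lemma pp_permutes: "pp n permutes {0..<n}"
proof (rule bij_imp_permutes)
  have inj: "inj_on (pp n) {0..<n}"
    unfolding inj_on_def pp_def by (auto; presburger)
  have sub: "pp n ` {0..<n} \<subseteq> {0..<n}"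
    unfolding pp_def by (auto; presburger)
  show "bij_betw (pp n) {0..<n} {0..<n}"
    unfolding bij_betw_def using inj endo_inj_surj[OF _ sub inj] by auto
  show "\<And>x. x \<notin> {0..<n} \<Longrightarrow> pp n x = x" unfolding pp_def by auto
qed

definition DD :: "(nat \<Rightarrow> 'a::comm_ring_1) \<Rightarrow> nat \<Rightarrow> 'a" where
  "DD x n = det (mat n n (\<lambda>(i, j). aa x (i + j + 1)))"

definition EE :: "(nat \<Rightarrow> 'a::comm_ring_1) \<Rightarrow> nat \<Rightarrow> 'a" where
  "EE x n = det (mat n n (\<lambda>(i, j). aa x (i + j)))"

lemma aa_odd': "aa x (2 * a + 1) = aa (sh x) a"
  using aa_odd[of "2*a+1" x] by simp
lemma aa_odd'': "aa x (Suc (2 * a)) = aa (sh x) a"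
  using aa_odd' by simp
lemma aa_even': "aa x (2 * a) = (if a = 0 then x 0 else 0)"
  using aa_even[of "2*a" x] by simp

lemma D_even: "DD x (2 * m) = EE (sh x) m * (DD (sh x) m :: 'a :: idom)"
proof -
  let ?f = "\<lambda>a b. aa x (a + b + 1)"
  have "DD x (2 * m) = det (mat (2*m) (2*m) (\<lambda>(i,j). ?f (pp (2*m) i) (pp (2*m) j)))"
    unfolding DD_def by (rule det_perm_sym[OF pp_permutes, symmetric])
  also have "mat (2*m) (2*m) (\<lambda>(i,j). ?f (pp (2*m) i) (pp (2*m) j))
     = four_block_mat (mat m m (\<lambda>(i, j). aa (sh x) (i + j))) (0\<^sub>m m m) (0\<^sub>m m m)
        (mat m m (\<lambda>(i, j). aa (sh x) (i + j + 1)))"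
  proof (rule eq_matI)
    fix i j assume ij: "i < dim_row (four_block_mat (mat m m (\<lambda>(i, j). aa (sh x) (i + j))) (0\<^sub>m m m) (0\<^sub>m m m)
        (mat m m (\<lambda>(i, j). aa (sh x) (i + j + 1))))"
       "j < dim_col (four_block_mat (mat m m (\<lambda>(i, j). aa (sh x) (i + j))) (0\<^sub>m m m) (0\<^sub>m m m)
        (mat m m (\<lambda>(i, j). aa (sh x) (i + j + 1))))"
    hence ij': "i < 2 * m" "j < 2 * m" by auto
    show "mat (2*m) (2*m) (\<lambda>(i,j). ?f (pp (2*m) i) (pp (2*m) j)) $$ (i, j) =
       four_block_mat (mat m m (\<lambda>(i, j). aa (sh x) (i + j))) (0\<^sub>m m m) (0\<^sub>m m m)
        (mat m m (\<lambda>(i, j). aa (sh x) (i + j + 1))) $$ (i, j)"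
    proof (cases "i < m"; cases "j < m")
      assume "i < m" "j < m"
      then show ?thesis using ij' aa_odd'[of x "i+j"] by (simp add: pp_def algebra_simps)
    next
      assume "i < m" "\<not> j < m"
      then show ?thesis using ij' aa_even'[of x "i+(j-m)+1"] by (simp add: pp_def algebra_simps)
    next
      assume "\<not> i < m" "j < m"
      then show ?thesis using ij' aa_even'[of x "(i-m)+j+1"] by (simp add: pp_def algebra_simps)
    next
      assume "\<not> i < m" "\<not> j < m"
      moreover have "pp (2*m) i + pp (2*m) j + 1 = 2 * ((i-m)+(j-m)+1) + 1"
        using calculation ij' by (simp add: pp_def; arith)
      ultimately show ?thesis using ij' aa_odd'[of x "(i-m)+(j-m)+1"] by simp
    qed
  qed auto
  also have "det \<dots> = EE (sh x) m * DD (sh x) m"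
    unfolding EE_def DD_def by (rule det_four_block_mat_upper_right_zero) auto
  finally show ?thesis .
qed

lemma D_odd: "DD x (2 * m + 1) = EE (sh x) (m + 1) * (DD (sh x) m :: 'a :: idom)"
proof -
  let ?f = "\<lambda>a b. aa x (a + b + 1)"
  let ?n = "2 * m + 1"
  let ?B = "four_block_mat (mat (m+1) (m+1) (\<lambda>(i, j). aa (sh x) (i + j))) (0\<^sub>m (m+1) m) (0\<^sub>m m (m+1))
        (mat m m (\<lambda>(i, j). aa (sh x) (i + j + 1)))"
  have "DD x ?n = det (mat ?n ?n (\<lambda>(i,j). ?f (pp ?n i) (pp ?n j)))"
    unfolding DD_def by (rule det_perm_sym[OF pp_permutes, symmetric])
  also have "mat ?n ?n (\<lambda>(i,j). ?f (pp ?n i) (pp ?n j)) = ?B"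
  proof (rule eq_matI)
    fix i j assume ij: "i < dim_row ?B" "j < dim_col ?B"
    hence ij': "i < ?n" "j < ?n" by auto
    show "mat ?n ?n (\<lambda>(i,j). ?f (pp ?n i) (pp ?n j)) $$ (i, j) = ?B $$ (i, j)"
    proof (cases "i < m + 1"; cases "j < m + 1")
      assume a: "i < m + 1" "j < m + 1"
      have "pp ?n i + pp ?n j + 1 = 2 * (i+j) + 1"
        using a ij' by (simp add: pp_def; arith)
      then show ?thesis using a ij' aa_odd'[of x "i+j"] by simp
    next
      assume a: "i < m + 1" "\<not> j < m + 1"
      have "pp ?n i + pp ?n j + 1 = 2 * (i+(j-(m+1))+1)"
        using a ij' by (simp add: pp_def; arith)
      then show ?thesis using a ij' aa_even'[of x "i+(j-(m+1))+1"] by simp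
    next
      assume a: "\<not> i < m + 1" "j < m + 1"
      have "pp ?n i + pp ?n j + 1 = 2 * ((i-(m+1))+j+1)"
        using a ij' by (simp add: pp_def; arith)
      then show ?thesis using a ij' aa_even'[of x "(i-(m+1))+j+1"] by simp
    next
      assume a: "\<not> i < m + 1" "\<not> j < m + 1"
      have "pp ?n i + pp ?n j + 1 = 2 * ((i-(m+1))+(j-(m+1))+1) + 1"
        using a ij' by (simp add: pp_def; arith)
      then show ?thesis using a ij' aa_odd'[of x "(i-(m+1))+(j-(m+1))+1"] by simp
    qed
  qed auto
  also have "det ?B = EE (sh x) (m+1) * DD (sh x) m"
    unfolding EE_def DD_def by (rule det_four_block_mat_upper_right_zero) auto
  finally show ?thesis .
qed

lemma det_block_zero_corner:
  fixes A :: "'a :: idom mat"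
  assumes A: "A \<in> carrier_mat t t" and B: "B \<in> carrier_mat t t" and C: "C \<in> carrier_mat t t"
  shows "det (four_block_mat A B C (0\<^sub>m t t)) = (-1)^t * det B * det C"
proof -
  have "det (four_block_mat A B C (0\<^sub>m t t)) = det (A * 0\<^sub>m t t - B * C)"
    by (rule det_four_block_mat[OF A B C]) (use C in auto)
  also have "A * 0\<^sub>m t t - B * C = (-1) \<cdot>\<^sub>m (B * C)"
    by (rule eq_matI) (use A B C in auto)
  also have "det \<dots> = (-1)^t * det (B * C)" using B C by simp
  also have "det (B * C) = det B * det C" by (rule det_mult[OF B C])
  finally show ?thesis by simp
qed

lemma E_even: "EE x (2 * t) = (-1)^t * (EE (sh x) t)^2 * (1 :: 'a :: idom)"
proof -
  let ?f = "\<lambda>a b. aa x (a + b)"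
  let ?n = "2 * t"
  let ?E = "mat t t (\<lambda>(i, j). aa (sh x) (i + j))"
  let ?B = "four_block_mat (mat t t (\<lambda>(i, j). if i = 0 \<and> j = 0 then x 0 else 0)) ?E ?E (0\<^sub>m t t)"
  have "EE x ?n = det (mat ?n ?n (\<lambda>(i,j). ?f (pp ?n i) (pp ?n j)))"
    unfolding EE_def by (rule det_perm_sym[OF pp_permutes, symmetric])
  also have "mat ?n ?n (\<lambda>(i,j). ?f (pp ?n i) (pp ?n j)) = ?B"
  proof (rule eq_matI)
    fix i j assume ij: "i < dim_row ?B" "j < dim_col ?B"
    hence ij': "i < ?n" "j < ?n" by auto
    show "mat ?n ?n (\<lambda>(i,j). ?f (pp ?n i) (pp ?n j)) $$ (i, j) = ?B $$ (i, j)"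
    proof (cases "i < t"; cases "j < t")
      assume a: "i < t" "j < t"
      have "pp ?n i + pp ?n j = 2 * (i+j)"
        using a ij' by (simp add: pp_def; arith)
      then show ?thesis using a ij' aa_even'[of x "i+j"] by simp
    next
      assume a: "i < t" "\<not> j < t"
      have "pp ?n i + pp ?n j = 2 * (i+(j-t)) + 1"
        using a ij' by (simp add: pp_def; arith)
      then show ?thesis using a ij' aa_odd'[of x "i+(j-t)"] by simp
    next
      assume a: "\<not> i < t" "j < t"
      have "pp ?n i + pp ?n j = 2 * ((i-t)+j) + 1"
        using a ij' by (simp add: pp_def; arith)
      then show ?thesis using a ij' aa_odd'[of x "(i-t)+j"] by simp
    next
      assume a: "\<not> i < t" "\<not> j < t"
      have "pp ?n i + pp ?n j = 2 * ((i-t)+(j-t)+1)"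
        using a ij' by (simp add: pp_def; arith)
      then show ?thesis using a ij' aa_even'[of x "(i-t)+(j-t)+1"] by simp
    qed
  qed auto
  also have "det ?B = (-1)^t * det ?E * det ?E"
    by (rule det_block_zero_corner) auto
  finally show ?thesis unfolding EE_def by (simp add: power2_eq_square)
qed

lemma det_first_row:
  fixes f :: "nat \<Rightarrow> nat \<Rightarrow> 'a :: idom"
  assumes z: "\<And>i j. i \<le> t \<Longrightarrow> j \<le> t \<Longrightarrow> (i, j) \<noteq> (0, 0) \<Longrightarrow> f i j = 0"
  shows "det (mat (2*t+1) (2*t+1) (\<lambda>(i,j). f i j)) = f 0 0 * det (mat (2*t) (2*t) (\<lambda>(i,j). f (i+1) (j+1)))"
proof -
  let ?n = "2*t+1"
  let ?M = "mat ?n ?n (\<lambda>(i,j). f i j)"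
  let ?M1 = "mat ?n ?n (\<lambda>(i,j). if i = 0 then (if j = 0 then f 0 0 else 0) else f i j)"
  have e1: "det ?M = (\<Sum>p \<in> {p. p permutes {0 ..< ?n}}. signof p * (\<Prod>i = 0 ..< ?n. ?M $$ (i, p i)))"
    by (rule det_def') simp
  have e2: "det ?M1 = (\<Sum>p \<in> {p. p permutes {0 ..< ?n}}. signof p * (\<Prod>i = 0 ..< ?n. ?M1 $$ (i, p i)))"
    by (rule det_def') simp
  have "det ?M = det ?M1"
    unfolding e1 e2
  proof (rule sum.cong[OF refl])
    fix p assume "p \<in> {p. p permutes {0..<?n}}"
    hence p: "p permutes {0..<?n}" by simp
    have pin: "\<And>i. i < ?n \<Longrightarrow> p i < ?n" using permutes_in_image[OF p] by auto
    show "signof p * (\<Prod>i = 0..<?n. ?M $$ (i, p i)) = signof p * (\<Prod>i = 0..<?n. ?M1 $$ (i, p i))"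
    proof (cases "p 0 = 0")
      case True
      have "(\<Prod>i = 0..<?n. ?M $$ (i, p i)) = (\<Prod>i = 0..<?n. ?M1 $$ (i, p i))"
      proof (rule prod.cong[OF refl])
        fix i assume "i \<in> {0..<?n}"
        hence "i < ?n" "p i < ?n" using pin by auto
        thus "?M $$ (i, p i) = ?M1 $$ (i, p i)" using True by auto
      qed
      thus ?thesis by simp
    next
      case False
      have z1: "(\<Prod>i = 0..<?n. ?M1 $$ (i, p i)) = 0"
      proof (rule prod_zero[OF _ bexI[of _ 0]])
        have "p 0 < ?n" using pin by simp
        thus "?M1 $$ (0, p 0) = 0" using False by simp
      qed auto
      have "\<exists>i \<le> t. p i \<le> t"
      proof (rule ccontr)
        assume "\<not> (\<exists>i \<le> t. p i \<le> t)"
        hence "p ` {0..t} \<subseteq> {t+1..<?n}" using pin by force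
        moreover have "inj_on p {0..t}"
          using permutes_inj[OF p] by (auto intro: inj_on_subset)
        ultimately have "card {0..t} \<le> card {t+1..<?n}"
          by (intro card_inj_on_le) auto
        thus False by simp
      qed
      then obtain i where i: "i \<le> t" "p i \<le> t" by blast
      have z2: "(\<Prod>i = 0..<?n. ?M $$ (i, p i)) = 0"
      proof (rule prod_zero[OF _ bexI[of _ i]])
        show "i \<in> {0..<?n}" using i by simp
        have "(i, p i) \<noteq> (0, 0)" using False by (cases "i = 0") auto
        thus "?M $$ (i, p i) = 0" using i z pin by simp
      qed simp
      show ?thesis by (simp only: z1 z2 mult_zero_right)
    qed
  qed
  also have "?M1 = four_block_mat (mat 1 1 (\<lambda>_. f 0 0)) (0\<^sub>m 1 (2*t))
      (mat (2*t) 1 (\<lambda>(i,j). f (i+1) 0)) (mat (2*t) (2*t) (\<lambda>(i,j). f (i+1) (j+1)))"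
    by (rule eq_matI) auto
  also have "det \<dots> = det (mat 1 1 (\<lambda>_. f 0 0)) * det (mat (2*t) (2*t) (\<lambda>(i,j). f (i+1) (j+1)))"
    by (rule det_four_block_mat_upper_right_zero) auto
  also have "det (mat 1 1 (\<lambda>_. f 0 0)) = f 0 0" by (subst det_single) auto
  finally show ?thesis .
qed

lemma E_odd: "EE x (2 * t + 1) = x 0 * (-1)^t * (DD (sh x) t)^2 * (1 :: 'a :: idom)"
proof -
  let ?f = "\<lambda>a b. aa x (a + b)"
  let ?n = "2 * t + 1"
  let ?g = "\<lambda>i j. ?f (pp ?n i) (pp ?n j)"
  let ?D = "mat t t (\<lambda>(i, j). aa (sh x) (i + j + 1))"
  let ?B = "four_block_mat (0\<^sub>m t t) ?D ?D (0\<^sub>m t t)"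
  have "EE x ?n = det (mat ?n ?n (\<lambda>(i,j). ?g i j))"
    unfolding EE_def by (rule det_perm_sym[OF pp_permutes, symmetric])
  also have "\<dots> = ?g 0 0 * det (mat (2*t) (2*t) (\<lambda>(i,j). ?g (i+1) (j+1)))"
  proof (rule det_first_row)
    fix i j assume a: "i \<le> t" "j \<le> t" "(i, j) \<noteq> (0, 0)"
    have "pp ?n i + pp ?n j = 2 * (i+j)"
      using a by (simp add: pp_def; arith)
    then show "?g i j = 0" using a aa_even'[of x "i+j"] by auto
  qed
  also have "?g 0 0 = x 0" using aa_even'[of x 0] by (simp add: pp_def)
  also have "mat (2*t) (2*t) (\<lambda>(i,j). ?g (i+1) (j+1)) = ?B"
  proof (rule eq_matI)
    fix i j assume ij: "i < dim_row ?B" "j < dim_col ?B"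
    hence ij': "i < 2*t" "j < 2*t" by auto
    show "mat (2*t) (2*t) (\<lambda>(i,j). ?g (i+1) (j+1)) $$ (i, j) = ?B $$ (i, j)"
    proof (cases "i < t"; cases "j < t")
      assume a: "i < t" "j < t"
      have "pp ?n (i+1) + pp ?n (j+1) = 2 * (i+j+2)"
        using a ij' by (simp add: pp_def; arith)
      then show ?thesis using a ij' aa_even'[of x "i+j+2"] by simp
    next
      assume a: "i < t" "\<not> j < t"
      have "pp ?n (i+1) + pp ?n (j+1) = 2 * (i+(j-t)+1) + 1"
        using a ij' by (simp add: pp_def; arith)
      then show ?thesis using a ij' aa_odd'[of x "i+(j-t)+1"] by simp
    next
      assume a: "\<not> i < t" "j < t"
      have "pp ?n (i+1) + pp ?n (j+1) = 2 * ((i-t)+j+1) + 1"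
        using a ij' by (simp add: pp_def; arith)
      then show ?thesis using a ij' aa_odd'[of x "(i-t)+j+1"] by simp
    next
      assume a: "\<not> i < t" "\<not> j < t"
      have "pp ?n (i+1) + pp ?n (j+1) = 2 * ((i-t)+(j-t)+1)"
        using a ij' by (simp add: pp_def; arith)
      then show ?thesis using a ij' aa_even'[of x "(i-t)+(j-t)+1"] by simp
    qed
  qed auto
  also have "det ?B = (-1)^t * det ?D * det ?D"
    by (rule det_block_zero_corner) auto
  finally show ?thesis unfolding DD_def by (simp add: power2_eq_square)
qed

lemma DD0[simp]: "DD x 0 = 1" unfolding DD_def by (rule det_dim_zero) auto
lemma EE0[simp]: "EE x 0 = 1" unfolding EE_def by (rule det_dim_zero) auto

lemma Ee: "EE x (2 * t) = (-1)^t * (EE (sh x) t)^2 * (1 :: 'a :: idom)" by (rule E_even)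
lemma Eo: "EE x (2 * t + 1) = x 0 * (-1)^t * (DD (sh x) t)^2 * (1 :: 'a :: idom)" by (rule E_odd)
lemma De: "DD x (2 * m) = EE (sh x) m * (DD (sh x) m :: 'a :: idom)" by (rule D_even)
lemma Do: "DD x (2 * m + 1) = EE (sh x) (m + 1) * (DD (sh x) m :: 'a :: idom)" by (rule D_odd)

lemma E1: "EE x 1 = (x 0 :: 'a :: idom)" using Eo[of x 0] by simp

definition good :: "(nat \<Rightarrow> 'a::zero) \<Rightarrow> bool" where
  "good x \<longleftrightarrow> (\<forall>k. x (2 ^ k - 1) \<noteq> 0)"

lemma good_sh: "good x \<Longrightarrow> good (sh x)"
  unfolding good_def sh_def
proof (intro allI)
  fix k assume g: "\<forall>k. x (2 ^ k - 1) \<noteq> 0"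
  have "2 * (2 ^ k - 1) + 1 = 2 ^ Suc k - (1::nat)"
  proof -
    have "(1::nat) \<le> 2 ^ k" by simp
    hence "2 * (2 ^ k - 1) + 1 = 2 * 2 ^ k - (1::nat)" by arith
    thus ?thesis by simp
  qed
  thus "x (2 * (2 ^ k - 1) + 1) \<noteq> 0" using g by metis
qed

lemma good0: "good x \<Longrightarrow> x 0 \<noteq> 0"
  unfolding good_def by (metis diff_self_eq_0 power_0)

lemma nz: "good (x :: nat \<Rightarrow> 'a :: idom) \<Longrightarrow> EE x n \<noteq> 0 \<and> DD x n \<noteq> 0"
proof (induction n arbitrary: x rule: less_induct)
  case (less n)
  have gs: "good (sh x)" using less.prems by (rule good_sh)
  have E1s: "EE (sh x) 1 \<noteq> 0" using E1[of "sh x"] good0[OF gs] by metis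
  show ?case
  proof (cases "even n")
    case True
    then obtain t where n: "n = 2 * t" by blast
    show ?thesis
    proof (cases "t = 0")
      case True thus ?thesis using n by simp
    next
      case False
      hence "t < n" using n by simp
      from less.IH[OF this gs] show ?thesis unfolding n Ee De by simp
    qed
  next
    case False
    then obtain t where n: "n = 2 * t + 1" by (metis oddE)
    have "t < n" using n by simp
    from less.IH[OF this gs] have h1: "EE (sh x) t \<noteq> 0" "DD (sh x) t \<noteq> 0" by auto
    have h2: "EE (sh x) (t+1) \<noteq> 0"
    proof (cases "t = 0")
      case True thus ?thesis using E1s by simp
    next
      case False
      hence "t + 1 < n" using n by simp
      from less.IH[OF this gs] show ?thesis by simp
    qed
    show ?thesis unfolding n Eo Do using h1 h2 good0[OF less.prems] by simp
  qed
qed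

lemma idA: "(DD y n)^2 * EE y (n+2) = - (EE y n * (DD y (n+1))^2 :: 'a :: idom)"
proof (cases "even n")
  case True
  then obtain t where n: "n = 2 * t" by blast
  have a1: "DD y n = EE (sh y) t * DD (sh y) t" unfolding n by (rule De)
  have a2: "EE y (n+2) = (-1)^(t+1) * (EE (sh y) (t+1))^2" using Ee[of y "t+1"] n by simp
  have a3: "EE y n = (-1)^t * (EE (sh y) t)^2" using Ee[of y t] n by simp
  have a4: "DD y (n+1) = EE (sh y) (t+1) * DD (sh y) t" using Do[of y t] n by simp
  show ?thesis unfolding a1 a2 a3 a4 by (simp add: algebra_simps power2_eq_square)
next
  case False
  then obtain t where n: "n = 2 * t + 1" by (metis oddE)
  have a1: "DD y n = EE (sh y) (t+1) * DD (sh y) t" unfolding n by (rule Do)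
  have a2: "EE y (n+2) = y 0 * (-1)^(t+1) * (DD (sh y) (t+1))^2" using Eo[of y "t+1"] n by simp
  have a3: "EE y n = y 0 * (-1)^t * (DD (sh y) t)^2" using Eo[of y t] n by simp
  have a4: "DD y (n+1) = EE (sh y) (t+1) * DD (sh y) (t+1)" using De[of y "t+1"] n by simp
  show ?thesis unfolding a1 a2 a3 a4 by (simp add: algebra_simps power2_eq_square)
qed

lemma idG: "EE y n * EE y (n+1) = (-1)^n * y 0 * (DD y n)^2 * (1 :: 'a :: idom)"
proof (cases "even n")
  case True
  then obtain t where n: "n = 2 * t" by blast
  have a1: "DD y n = EE (sh y) t * DD (sh y) t" unfolding n by (rule De)
  have a3: "EE y n = (-1)^t * (EE (sh y) t)^2" using Ee[of y t] n by simp
  have a4: "EE y (n+1) = y 0 * (-1)^t * (DD (sh y) t)^2" using Eo[of y t] n by simp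
  have s: "(-1::'a)^n = 1" using n by simp
  show ?thesis unfolding a1 a3 a4 s by (simp add: algebra_simps power2_eq_square power_mult_distrib[symmetric])
next
  case False
  then obtain t where n: "n = 2 * t + 1" by (metis oddE)
  have a1: "DD y n = EE (sh y) (t+1) * DD (sh y) t" unfolding n by (rule Do)
  have a3: "EE y n = y 0 * (-1)^t * (DD (sh y) t)^2" using Eo[of y t] n by simp
  have a4: "EE y (n+1) = (-1)^(t+1) * (EE (sh y) (t+1))^2" using Ee[of y "t+1"] n by simp
  have s: "(-1::'a)^n = -1" using n by simp
  show ?thesis unfolding a1 a3 a4 s by (simp add: algebra_simps power2_eq_square power_mult_distrib[symmetric])
qed

definition TT :: "(nat \<Rightarrow> 'a::field) \<Rightarrow> nat \<Rightarrow> 'a" where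
  "TT x n = DD x n * DD x (n + 2) / (DD x (n + 1))^2"

lemma div_eq_helper: "(b::'a::field) \<noteq> 0 \<Longrightarrow> d \<noteq> 0 \<Longrightarrow> a * d = c * b \<Longrightarrow> a / b = c / d"
  by (simp add: frac_eq_eq)

lemma keyA: "(D0::'a::comm_ring_1)^2 * E2 = - (E0 * D1^2) \<Longrightarrow>
   (E1 * D0) * (E2 * D1) * (E1 * D0)^2 = (- ((E0 * D0) * (E1 * D1))) * (E1 * D1)^2"
proof -
  assume h: "D0^2 * E2 = - (E0 * D1^2)"
  have "(E1 * D0) * (E2 * D1) * (E1 * D0)^2 = (E1*E1*E1*D0*D1) * (D0^2 * E2)"
    by (simp add: power2_eq_square mult_ac)
  also have "\<dots> = (E1*E1*E1*D0*D1) * (- (E0 * D1^2))" using h by simp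
  also have "\<dots> = (- ((E0 * D0) * (E1 * D1))) * (E1 * D1)^2" by (simp add: power2_eq_square mult_ac)
  finally show ?thesis .
qed

lemma thmA:
  fixes x :: "nat \<Rightarrow> 'a::field"
  assumes g: "good x"
  shows "TT x (2 * n + 1) = - TT x (2 * n)"
proof -
  let ?y = "sh x"
  have gy: "good ?y" using g by (rule good_sh)
  have d0: "DD x (2*n) = EE ?y n * DD ?y n" by (rule De)
  have d1: "DD x (2*n+1) = EE ?y (n+1) * DD ?y n" by (rule Do)
  have d2: "DD x (2*n+2) = EE ?y (n+1) * DD ?y (n+1)" using De[of x "n+1"] by simp
  have d3: "DD x (2*n+3) = EE ?y (n+2) * DD ?y (n+1)" using Do[of x "n+1"] by (simp add: numeral_3_eq_3)
  have t1: "TT x (2*n+1) = DD x (2*n+1) * DD x (2*n+3) / (DD x (2*n+2))^2"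
    unfolding TT_def by (simp add: numeral_3_eq_3)
  have t0: "TT x (2*n) = DD x (2*n) * DD x (2*n+2) / (DD x (2*n+1))^2"
    unfolding TT_def by simp
  have nz1: "EE ?y k \<noteq> 0" "DD ?y k \<noteq> 0" for k using nz[OF gy] by auto
  have key: "(EE ?y (n+1) * DD ?y n) * (EE ?y (n+2) * DD ?y (n+1)) * (EE ?y (n+1) * DD ?y n)^2
      = (- ((EE ?y n * DD ?y n) * (EE ?y (n+1) * DD ?y (n+1)))) * (EE ?y (n+1) * DD ?y (n+1))^2"
    by (rule keyA[OF idA[of ?y n]])
  have "TT x (2*n+1) = (- ((EE ?y n * DD ?y n) * (EE ?y (n+1) * DD ?y (n+1)))) / (EE ?y (n+1) * DD ?y n)^2"
    unfolding t1 d1 d2 d3 by (rule div_eq_helper[OF _ _ key]) (simp_all add: nz1)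
  also have "\<dots> = - TT x (2*n)" unfolding t0 d0 d1 d2 by simp
  finally show ?thesis .
qed

lemma keyB: "(E::'a::comm_ring_1)*E1 = s*c*D^2 \<Longrightarrow> s*s = 1 \<Longrightarrow>
   (s*E^2*(E*D)*(y*s*D^2*(E1*D)))*y = (s*c)*(y*s*D^2*(E*D))^2"
proof -
  assume h: "E*E1 = s*c*D^2"
  have "(s*E^2*(E*D)*(y*s*D^2*(E1*D)))*y = (s*s*y*y*E*E*D*D*D*D)*(E*E1)"
    by (simp add: power2_eq_square mult_ac)
  also have "\<dots> = (s*s*y*y*E*E*D*D*D*D)*(s*c*D^2)" using h by simp
  also have "\<dots> = (s*c)*(y*s*D^2*(E*D))^2" by (simp add: power2_eq_square mult_ac)
  finally show ?thesis .
qed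

lemma thmB:
  fixes x :: "nat \<Rightarrow> 'a::field"
  assumes g: "good x"
  shows "TT x (4 * n) = (-1)^n * x 3 / x 1"
proof -
  let ?y = "sh x"
  let ?z = "sh (sh x)"
  have gy: "good ?y" using g by (rule good_sh)
  have gz: "good ?z" using gy by (rule good_sh)
  have nz1: "EE ?z k \<noteq> 0" "DD ?z k \<noteq> 0" for k using nz[OF gz] by auto
  have y0: "?y 0 = x 1" by (simp add: sh_def)
  have z0: "?z 0 = x 3" by (simp add: sh_def numeral_3_eq_3)
  have x1: "x 1 \<noteq> 0" using good0[OF gy] y0 by simp
  have t: "TT x (4*n) = DD x (2*(2*n)) * DD x (2*(2*n+1)) / (DD x (2*(2*n)+1))^2"
    unfolding TT_def by (simp add: algebra_simps)
  have a1: "DD x (2*(2*n)) = EE ?y (2*n) * DD ?y (2*n)" by (rule De)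
  have a2: "DD x (2*(2*n+1)) = EE ?y (2*n+1) * DD ?y (2*n+1)" by (rule De)
  have a3: "DD x (2*(2*n)+1) = EE ?y (2*n+1) * DD ?y (2*n)" using Do[of x "2*n"] by simp
  have b1: "EE ?y (2*n) = (-1)^n * (EE ?z n)^2" using Ee[of ?y n] by simp
  have b2: "DD ?y (2*n) = EE ?z n * DD ?z n" by (rule De)
  have b3: "EE ?y (2*n+1) = x 1 * (-1)^n * (DD ?z n)^2" using Eo[of ?y n] y0 by simp
  have b4: "DD ?y (2*n+1) = EE ?z (n+1) * DD ?z n" by (rule Do)
  have G: "EE ?z n * EE ?z (n+1) = (-1)^n * x 3 * (DD ?z n)^2" using idG[of ?z n] z0 by simp
  have s: "(-1::'a)^n * (-1)^n = 1" by (simp add: power_add[symmetric])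
  have key: "((-1)^n * (EE ?z n)^2 * (EE ?z n * DD ?z n) * (x 1 * (-1)^n * (DD ?z n)^2 * (EE ?z (n+1) * DD ?z n))) * x 1
     = ((-1)^n * x 3) * (x 1 * (-1)^n * (DD ?z n)^2 * (EE ?z n * DD ?z n))^2"
    using keyB[OF G s] .
  show ?thesis unfolding t a1 a2 a3 b1 b2 b3 b4
    by (rule div_eq_helper[OF _ _ key]) (use x1 in \<open>simp_all add: nz1\<close>)
qed

lemma keyH0: "(E::'a::comm_ring_1)*E1 = s*c*D^2 \<Longrightarrow> s*s = 1 \<Longrightarrow>
   (E*D)*(E1*D)*y^2 = (s*c)*(y*s*D^2)^2"
proof -
  assume h: "E*E1 = s*c*D^2" and s: "s*s = 1"
  have "(E*D)*(E1*D)*y^2 = (y*y*D*D)*(E*E1)" by (simp add: power2_eq_square mult_ac)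
  also have "\<dots> = (y*y*D*D)*(s*c*D^2)" using h by simp
  also have "\<dots> = (s*s)*((s*c)*(y*y*D*D*D*D))" using s by (simp add: power2_eq_square mult_ac)
  also have "\<dots> = (s*c)*(y*s*D^2)^2" by (simp add: power2_eq_square mult_ac)
  finally show ?thesis .
qed

lemma keyH1: "(s::'a::comm_ring_1)*s = 1 \<Longrightarrow>
   (E1*D0)*(E1*D1)*E1^2 = (D0*D1)*(s*E1^2)^2"
proof -
  assume s: "s*s = 1"
  have "(D0*D1)*(s*E1^2)^2 = (s*s)*((E1*D0)*(E1*D1)*E1^2)" by (simp add: power2_eq_square mult_ac)
  thus ?thesis using s by simp
qed

lemma sq_sign: "((-1::'a::comm_ring_1)^n) * (-1)^n = 1"
  by (simp add: power_add[symmetric])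

lemma thmH:
  fixes z :: "nat \<Rightarrow> 'a::field"
  assumes "good z"
  shows "DD z (2^(j+1)*n + 2^j - 1) * DD z (2^(j+1)*n + 2^j - 1 + 1) / (EE z (2^(j+1)*n + 2^j - 1 + 1))^2
      = (-1)^n * z (2^(j+1) - 1) / (z (2^j - 1))^2"
  using assms
proof (induction j arbitrary: z)
  case 0
  let ?y = "sh z"
  have gy: "good ?y" using 0 by (rule good_sh)
  have nz1: "EE ?y k \<noteq> 0" "DD ?y k \<noteq> 0" for k using nz[OF gy] by auto
  have z0: "z 0 \<noteq> 0" using good0[OF 0] .
  have ar: "2^(0+1)*n + 2^0 - 1 = 2 * n" by simp
  have a1: "DD z (2*n) = EE ?y n * DD ?y n" by (rule De)
  have a2: "DD z (2*n+1) = EE ?y (n+1) * DD ?y n" by (rule Do)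
  have a3: "EE z (2*n+1) = z 0 * (-1)^n * (DD ?y n)^2" using Eo[of z n] by simp
  have G: "EE ?y n * EE ?y (n+1) = (-1)^n * z 1 * (DD ?y n)^2" using idG[of ?y n] by (simp add: sh_def)
  have key: "(EE ?y n * DD ?y n) * (EE ?y (n+1) * DD ?y n) * (z 0)^2 = ((-1)^n * z 1) * (z 0 * (-1)^n * (DD ?y n)^2)^2"
    by (rule keyH0[OF G sq_sign])
  have i1: "2^(0+1) - 1 = (1::nat)" by simp
  have i2: "2^0 - 1 = (0::nat)" by simp
  show ?case unfolding ar a1 a2 a3 i1 i2
    by (rule div_eq_helper[OF _ _ key]) (simp_all add: nz1 z0)
next
  case (Suc j)
  let ?y = "sh z"
  have gy: "good ?y" using Suc.prems by (rule good_sh)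
  have nz1: "EE ?y k \<noteq> 0" "DD ?y k \<noteq> 0" for k using nz[OF gy] by auto
  define u where "u = 2^(j+1)*n + 2^j - (1::nat)"
  have p1: "(1::nat) \<le> 2^j" by simp
  have ar: "2^(Suc j+1)*n + 2^(Suc j) - 1 = 2*u + 1"
    unfolding u_def using p1 by (simp add: algebra_simps; arith)
  have b1: "DD z (2*u+1) = EE ?y (u+1) * DD ?y u" by (rule Do)
  have b2: "DD z (2*u+1+1) = EE ?y (u+1) * DD ?y (u+1)" using De[of z "u+1"] by simp
  have b3: "EE z (2*u+1+1) = (-1)^(u+1) * (EE ?y (u+1))^2" using Ee[of z "u+1"] by simp
  have IH: "DD ?y u * DD ?y (u+1) / (EE ?y (u+1))^2 = (-1)^n * ?y (2^(j+1) - 1) / (?y (2^j - 1))^2"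
    using Suc.IH[OF gy] unfolding u_def .
  have key: "(EE ?y (u+1) * DD ?y u) * (EE ?y (u+1) * DD ?y (u+1)) * (EE ?y (u+1))^2
      = (DD ?y u * DD ?y (u+1)) * ((-1)^(u+1) * (EE ?y (u+1))^2)^2"
    by (rule keyH1[OF sq_sign])
  have r: "DD z (2*u+1) * DD z (2*u+1+1) / (EE z (2*u+1+1))^2 = DD ?y u * DD ?y (u+1) / (EE ?y (u+1))^2"
    unfolding b1 b2 b3 by (rule div_eq_helper[OF _ _ key]) (simp_all add: nz1)
  have i1: "?y (2^(j+1) - 1) = z (2^(Suc j + 1) - 1)"
  proof -
    have "(1::nat) \<le> 2^(j+1)" by simp
    hence "2 * (2^(j+1) - 1) + 1 = 2 * 2^(j+1) - (1::nat)" by arith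
    hence "2 * (2^(j+1) - 1) + 1 = 2^(Suc j + 1) - (1::nat)" by simp
    thus ?thesis by (simp add: sh_def)
  qed
  have i2: "?y (2^j - 1) = z (2^(Suc j) - 1)"
  proof -
    have "2 * (2^j - 1) + 1 = 2 * 2^j - (1::nat)" using p1 by arith
    hence "2 * (2^j - 1) + 1 = 2^(Suc j) - (1::nat)" by simp
    thus ?thesis by (simp add: sh_def)
  qed
  show ?case unfolding ar r IH i1 i2 ..
qed

lemma thmC:
  fixes x :: "nat \<Rightarrow> 'a::field"
  assumes g: "good x" and k: "k \<ge> 2"
  shows "TT x (2 ^ (k + 1) * n + 2 ^ k - 1) = (-1) ^ n * x 1 * x (2 ^ (k + 1) - 1) / (x (2 ^ k - 1))^2"
proof -
  obtain j where kj: "k = j + 2" using k by (metis add.commute le_Suc_ex)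
  let ?y = "sh x"
  let ?z = "sh (sh x)"
  have gy: "good ?y" using g by (rule good_sh)
  have gz: "good ?z" using gy by (rule good_sh)
  have nz1: "EE ?z k \<noteq> 0" "DD ?z k \<noteq> 0" for k using nz[OF gz] by auto
  define s where "s = 2^(j+1)*n + 2^j - (1::nat)"
  have p1: "(1::nat) \<le> 2^j" by simp
  have ar: "2 ^ (k + 1) * n + 2 ^ k - 1 = 2*(2*s+1)+1"
    unfolding s_def kj using p1 by (simp add: algebra_simps; arith)
  have t: "TT x (2*(2*s+1)+1) = DD x (2*(2*s+1)+1) * DD x (2*(2*s+2)+1) / (DD x (2*(2*s+2)))^2"
    unfolding TT_def by (simp add: algebra_simps)
  have c1: "DD x (2*(2*s+1)+1) = EE ?y (2*s+2) * DD ?y (2*s+1)" using Do[of x "2*s+1"] by simp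
  have c2: "DD x (2*(2*s+2)+1) = EE ?y (2*s+3) * DD ?y (2*s+2)" using Do[of x "2*s+2"] by (simp add: numeral_3_eq_3)
  have c3: "DD x (2*(2*s+2)) = EE ?y (2*s+2) * DD ?y (2*s+2)" by (rule De)
  have e1: "DD ?y (2*s+1) = EE ?z (s+1) * DD ?z s" by (rule Do)
  have e2: "EE ?y (2*s+3) = x 1 * (-1)^(s+1) * (DD ?z (s+1))^2"
    using Eo[of ?y "s+1"] by (simp add: sh_def numeral_3_eq_3)
  have e3: "EE ?y (2*s+2) = (-1)^(s+1) * (EE ?z (s+1))^2" using Ee[of ?y "s+1"] by simp
  have e4: "DD ?y (2*s+2) = EE ?z (s+1) * DD ?z (s+1)" using De[of ?y "s+1"] by simp
  have key: "((-1)^(s+1) * (EE ?z (s+1))^2 * (EE ?z (s+1) * DD ?z s)) *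
      (x 1 * (-1)^(s+1) * (DD ?z (s+1))^2 * (EE ?z (s+1) * DD ?z (s+1))) * (EE ?z (s+1))^2
    = (x 1 * (DD ?z s * DD ?z (s+1))) * ((-1)^(s+1) * (EE ?z (s+1))^2 * (EE ?z (s+1) * DD ?z (s+1)))^2"
    by (simp add: power2_eq_square mult_ac)
  have r: "TT x (2*(2*s+1)+1) = x 1 * (DD ?z s * DD ?z (s+1)) / (EE ?z (s+1))^2"
    unfolding t c1 c2 c3 e1 e2 e3 e4 by (rule div_eq_helper[OF _ _ key]) (simp_all add: nz1)
  have H: "DD ?z s * DD ?z (s+1) / (EE ?z (s+1))^2 = (-1)^n * ?z (2^(j+1) - 1) / (?z (2^j - 1))^2"
    using thmH[OF gz, of j n] unfolding s_def .
  have i1: "?z (2^(j+1) - 1) = x (2 ^ (k + 1) - 1)"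
  proof -
    have "(1::nat) \<le> 2^(j+1)" by simp
    hence "2 * (2 * (2^(j+1) - 1) + 1) + 1 = 4 * 2^(j+1) - (1::nat)" by arith
    hence "2 * (2 * (2^(j+1) - 1) + 1) + 1 = 2 ^ (k + 1) - (1::nat)" unfolding kj by simp
    thus ?thesis by (simp add: sh_def)
  qed
  have i2: "?z (2^j - 1) = x (2 ^ k - 1)"
  proof -
    have "2 * (2 * (2^j - 1) + 1) + 1 = 4 * 2^j - (1::nat)" using p1 by arith
    hence "2 * (2 * (2^j - 1) + 1) + 1 = 2 ^ k - (1::nat)" unfolding kj by simp
    thus ?thesis by (simp add: sh_def)
  qed
  have "TT x (2 ^ (k + 1) * n + 2 ^ k - 1) = x 1 * (DD ?z s * DD ?z (s+1) / (EE ?z (s+1))^2)"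
    unfolding ar r by simp
  also have "\<dots> = (-1) ^ n * x 1 * x (2 ^ (k + 1) - 1) / (x (2 ^ k - 1))^2"
    unfolding H i1 i2 by simp
  finally show ?thesis .
qed

lemma X_nz: "X k \<noteq> 0"
proof
  assume "X k = 0"
  hence "Fract (Poly_Mapping.single (Poly_Mapping.single k 1) 1) 1 = Fract (0::mpoly) 1"
    unfolding X_def Zero_fract_def by simp
  hence "(Poly_Mapping.single (Poly_Mapping.single k 1) 1 :: mpoly) = 0" by (simp add: eq_fract)
  hence "Poly_Mapping.lookup (Poly_Mapping.single (Poly_Mapping.single k 1) 1 :: mpoly) (Poly_Mapping.single k 1) = 0"
    by simp
  thus False by simp
qed

lemma goodX: "good X" unfolding good_def using X_nz by auto

lemma T_eq: "T = TT X"
proof -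
  have "seq_a = aa X" unfolding seq_a_def aa_def by auto
  hence "hankelD = DD X" unfolding hankelD_def DD_def by auto
  thus ?thesis unfolding T_def TT_def by auto
qed

theorem theorem5p7:
  shows "(\<forall>n. T (2 * n + 1) = - T (2 * n))
       \<and> (\<forall>n. T (4 * n) = (-1) ^ n * X 3 / X 1)
       \<and> (\<forall>k n. k \<ge> 2 \<longrightarrow>
            T (2 ^ (k + 1) * n + 2 ^ k - 1)
              = (-1) ^ n * X 1 * X (2 ^ (k + 1) - 1) / (X (2 ^ k - 1))^2)"
  unfolding T_eq using thmA[OF goodX] thmB[OF goodX] thmC[OF goodX] by blast

end
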